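(* Let $(X,\mathcal{M},\mu)$ be a measure space and $\Phi$ an $N^*$-function for which there is a constant $k\ge2$ with $\Phi(kx)=2\Phi(x)$ for all $x>0$. Then $(L_\Phi(X),\|\cdot\|_\Phi)$ is a quasi-Banach space, i.e. a quasi-normed space in which every sequence $(f_n)$ with $\|f_n-f_m\|_\Phi\to0$ as $n,m\to\infty$ converges in $\|\cdot\|_\Phi$.
   Context: An $N^*$-function is a function $\Phi:\mathbb{R}\to\mathbb{R}$ of the form $\Phi(x)=\int_0^{|x|}p(t)\,dt<+\infty$ for all $x$, where $p:[0,\infty)\to[0,\infty]$ is right-continuous, positive on $(0,\infty)$, non-increasing, and satisfies $\lim_{t\to0^+}p(t)=+\infty$ and $\lim_{t\to+\infty}p(t)=0$. $L_\Phi(X)$ is the space of (classes modulo a.e. equality of) measurable $f$ with $\int_X\Phi(f)\,d\mu<\infty$, and $\|f\|_\Phi=\inf\{\lambda>0:\int_X\Phi(|f|/\lambda)\,d\mu\le1\}$. *)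

theory Defs
  imports "HOL-Analysis.Analysis"
begin

text \<open>N*-function: \<Phi>(x) = integral of p over (0,|x|], with p positive, non-increasing,
 right-continuous on (0,\<infinity>), p(t) \<rightarrow> +\<infinity> as t \<rightarrow> 0+, p(t) \<rightarrow> 0 as t \<rightarrow> \<infinity>,
 and the integral finite for every x. (The value p(0) = +\<infinity> is irrelevant for the integral.)\<close>
definition Nstar_function :: "(real \<Rightarrow> real) \<Rightarrow> bool" where
  "Nstar_function \<Phi> \<longleftrightarrow>
     (\<exists>p :: real \<Rightarrow> real.
        (\<forall>t>0. p t > 0) \<and>
        (\<forall>s t. 0 < s \<longrightarrow> s \<le> t \<longrightarrow> p t \<le> p s) \<and>
        (\<forall>t>0. continuous (at_right t) p) \<and>
        filterlim p at_top (at_right 0) \<and>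
        (p \<longlongrightarrow> 0) at_top \<and>
        (\<forall>x. p integrable_on {0<..\<bar>x\<bar>} \<and> \<Phi> x = integral {0<..\<bar>x\<bar>} p))"

text \<open>Orlicz space L_\<Phi>(X): measurable f with \<integral> \<Phi>(f) d\<mu> < \<infinity> (representatives; the
 quotient modulo a.e. equality is handled through the null predicate below).\<close>
definition L_Phi :: "'a measure \<Rightarrow> (real \<Rightarrow> real) \<Rightarrow> ('a \<Rightarrow> real) set" where
  "L_Phi M \<Phi> = {f. f \<in> borel_measurable M \<and> (\<integral>\<^sup>+ x. ennreal (\<Phi> (f x)) \<partial>M) < \<infinity>}"

definition orlicz_norm :: "'a measure \<Rightarrow> (real \<Rightarrow> real) \<Rightarrow> ('a \<Rightarrow> real) \<Rightarrow> real" where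
  "orlicz_norm M \<Phi> f =
     Inf {l::real. l > 0 \<and> (\<integral>\<^sup>+ x. ennreal (\<Phi> (\<bar>f x\<bar> / l)) \<partial>M) \<le> 1}"

text \<open>Quasi-normed space of functions V with quasi-norm N, where Z f means
 "f is the zero element" (here: f = 0 almost everywhere).\<close>
definition quasi_normed :: "('a \<Rightarrow> real) set \<Rightarrow> (('a \<Rightarrow> real) \<Rightarrow> real) \<Rightarrow> (('a \<Rightarrow> real) \<Rightarrow> bool) \<Rightarrow> bool" where
  "quasi_normed V N Z \<longleftrightarrow>
     (\<lambda>x. 0) \<in> V \<and>
     (\<forall>f\<in>V. \<forall>g\<in>V. (\<lambda>x. f x + g x) \<in> V) \<and>
     (\<forall>c. \<forall>f\<in>V. (\<lambda>x. c * f x) \<in> V) \<and>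
     (\<forall>f\<in>V. 0 \<le> N f) \<and>
     (\<forall>f\<in>V. N f = 0 \<longleftrightarrow> Z f) \<and>
     (\<forall>c. \<forall>f\<in>V. N (\<lambda>x. c * f x) = \<bar>c\<bar> * N f) \<and>
     (\<exists>C\<ge>1. \<forall>f\<in>V. \<forall>g\<in>V. N (\<lambda>x. f x + g x) \<le> C * (N f + N g))"

definition quasi_banach :: "('a \<Rightarrow> real) set \<Rightarrow> (('a \<Rightarrow> real) \<Rightarrow> real) \<Rightarrow> (('a \<Rightarrow> real) \<Rightarrow> bool) \<Rightarrow> bool" where
  "quasi_banach V N Z \<longleftrightarrow>
     quasi_normed V N Z \<and>
     (\<forall>F :: nat \<Rightarrow> 'a \<Rightarrow> real.
        (\<forall>n. F n \<in> V) \<and>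
        (\<forall>e>0. \<exists>n0. \<forall>n\<ge>n0. \<forall>m\<ge>n0. N (\<lambda>x. F n x - F m x) < e) \<longrightarrow>
        (\<exists>f\<in>V. (\<lambda>n. N (\<lambda>x. F n x - f x)) \<longlonglongrightarrow> 0))"

end

theory Submission
  imports Defs
begin


lemma halfopen_has_integral:
  fixes g :: "real \<Rightarrow> real"
  shows "(g has_integral y) {0<..a} \<longleftrightarrow> (g has_integral y) {0..a}"
proof (rule has_integral_spike_set_eq)
  have "{x \<in> {0<..a} - {0..a}. g x \<noteq> 0} = {}" by auto
  then show "negligible {x \<in> {0<..a} - {0..a}. g x \<noteq> 0}" by (metis negligible_empty)
  have "{x \<in> {0..a} - {0<..a}. g x \<noteq> 0} \<subseteq> {0}" by auto
  then show "negligible {x \<in> {0..a} - {0<..a}. g x \<noteq> 0}"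
    using negligible_subset negligible_sing by blast
qed

lemma halfopen_integrable:
  fixes g :: "real \<Rightarrow> real"
  shows "g integrable_on {0<..a} \<longleftrightarrow> g integrable_on {0..a}"
  using halfopen_has_integral by (meson integrable_on_def)

lemma halfopen_integral:
  fixes g :: "real \<Rightarrow> real"
  assumes "g integrable_on {0<..a}"
  shows "integral {0<..a} g = integral {0..a} g"
  using assms halfopen_has_integral halfopen_integrable
  by (metis integrable_integral integral_unique)

lemma Phi_props:
  assumes "Nstar_function \<Phi>"
  shows "\<And>x. \<Phi> \<bar>x\<bar> = \<Phi> x"
    and "\<And>x y. \<bar>x\<bar> \<le> \<bar>y\<bar> \<Longrightarrow> \<Phi> x \<le> \<Phi> y"
    and "\<Phi> 0 = 0"
    and "\<And>x. 0 \<le> \<Phi> x"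
    and "continuous_on UNIV \<Phi>"
    and "\<exists>c>0. \<forall>x. c * min \<bar>x\<bar> 1 \<le> \<Phi> x"
proof -
  obtain p :: "real \<Rightarrow> real" where ppos: "\<forall>t>0. p t > 0"
    and pmono: "\<forall>s t. 0 < s \<longrightarrow> s \<le> t \<longrightarrow> p t \<le> p s"
    and pint: "\<forall>x. p integrable_on {0<..\<bar>x\<bar>} \<and> \<Phi> x = integral {0<..\<bar>x\<bar>} p"
    using assms unfolding Nstar_function_def by blast
  show ev: "\<And>x. \<Phi> \<bar>x\<bar> = \<Phi> x" using pint by (metis abs_abs)
  show mono: "\<And>x y. \<bar>x\<bar> \<le> \<bar>y\<bar> \<Longrightarrow> \<Phi> x \<le> \<Phi> y"
  proof -
    fix x y :: real assume "\<bar>x\<bar> \<le> \<bar>y\<bar>"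
    then have "integral {0<..\<bar>x\<bar>} p \<le> integral {0<..\<bar>y\<bar>} p"
      using pint ppos by (intro integral_subset_le) (auto simp: less_imp_le)
    then show "\<Phi> x \<le> \<Phi> y" using pint by simp
  qed
  show z: "\<Phi> 0 = 0" using pint[rule_format, of 0] by simp
  show "\<And>x. 0 \<le> \<Phi> x" using mono[of 0] z by simp
  have cl: "\<And>x. p integrable_on {0..\<bar>x\<bar>} \<and> \<Phi> x = integral {0..\<bar>x\<bar>} p"
    using pint halfopen_integrable halfopen_integral by metis
  show "continuous_on UNIV \<Phi>"
  proof -
    have "isCont \<Phi> x" for x
    proof -
      define b where "b = \<bar>x\<bar> + 1"
      have b: "b \<ge> 0" "\<bar>b\<bar> = b" unfolding b_def by auto
      have "continuous_on {0..b} (\<lambda>y. integral {0..y} p)"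
        using cl[of b] b by (intro indefinite_integral_continuous_1) auto
      then have "continuous_on {-b..b} (\<lambda>y. integral {0..\<bar>y\<bar>} p)"
        by (rule continuous_on_compose2[where f=abs]) (auto intro: continuous_intros)
      then have "continuous_on {-b..b} \<Phi>"
        using cl by (metis (no_types, lifting) continuous_on_cong)
      then have "continuous_on {-b<..<b} \<Phi>"
        by (rule continuous_on_subset) auto
      moreover have "x \<in> {-b<..<b}" unfolding b_def by auto
      ultimately show ?thesis
        using continuous_on_eq_continuous_at open_greaterThanLessThan by blast
    qed
    then show ?thesis by (simp add: continuous_at_imp_continuous_on)
  qed
  show "\<exists>c>0. \<forall>x. c * min \<bar>x\<bar> 1 \<le> \<Phi> x"
  proof (intro exI[of _ "p 1"] conjI allI)
    show "p 1 > 0" using ppos by simp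
    have small: "p 1 * \<bar>x\<bar> \<le> \<Phi> x" if "\<bar>x\<bar> \<le> 1" for x
    proof -
      have ci: "(\<lambda>_. p 1) integrable_on {0<..\<bar>x\<bar>}"
        using halfopen_integrable by auto
      have "integral {0<..\<bar>x\<bar>} (\<lambda>_. p 1) \<le> integral {0<..\<bar>x\<bar>} p"
        using ci pint pmono that by (intro integral_le) auto
      moreover have "integral {0<..\<bar>x\<bar>} (\<lambda>_. p 1) = p 1 * \<bar>x\<bar>"
        using halfopen_integral[OF ci] by simp
      ultimately show ?thesis using pint by simp
    qed
    fix x :: real
    show "p 1 * min \<bar>x\<bar> 1 \<le> \<Phi> x"
    proof (cases "\<bar>x\<bar> \<le> 1")
      case True then show ?thesis using small by simp
    next
      case False
      then have "p 1 * 1 \<le> \<Phi> 1" using small[of 1] by simp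
      also have "\<Phi> 1 \<le> \<Phi> x" using mono False by simp
      finally show ?thesis using False by simp
    qed
  qed
qed



locale orl =
  fixes M :: "'a measure" and \<Phi> :: "real \<Rightarrow> real" and k c0 :: real
  assumes ev: "\<And>x. \<Phi> \<bar>x\<bar> = \<Phi> x"
    and mono: "\<And>x y. \<bar>x\<bar> \<le> \<bar>y\<bar> \<Longrightarrow> \<Phi> x \<le> \<Phi> y"
    and z: "\<Phi> 0 = 0"
    and nn: "\<And>x. 0 \<le> \<Phi> x"
    and cont: "continuous_on UNIV \<Phi>"
    and cpos: "c0 > 0" and low: "\<And>x. c0 * min \<bar>x\<bar> 1 \<le> \<Phi> x"
    and k2: "k \<ge> 2" and kx: "\<And>x. x > 0 \<Longrightarrow> \<Phi> (k*x) = 2*\<Phi> x"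
begin

lemma Phi_meas[measurable]: "\<Phi> \<in> borel_measurable borel"
  by (rule borel_measurable_continuous_onI[OF cont])

lemma scale: "\<Phi> (k*x) = 2*\<Phi> x"
proof -
  consider "x > 0" | "x = 0" | "x < 0" by linarith
  then show ?thesis
  proof cases
    case 3
    have "\<Phi> (k*x) = \<Phi> \<bar>k*x\<bar>" using ev by simp
    also have "\<bar>k*x\<bar> = k * (-x)" using 3 k2 by (simp add: abs_mult)
    also have "\<Phi> (k*(-x)) = 2 * \<Phi> (-x)" using 3 kx[of "-x"] by simp
    also have "\<Phi> (-x) = \<Phi> x" using ev by (metis abs_minus_cancel)
    finally show ?thesis .
  qed (use kx z in auto)
qed

lemma scale_pow: "\<Phi> (k^m*x) = 2^m*\<Phi> x"
proof (induction m arbitrary: x)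
  case (Suc m)
  have "\<Phi> (k^Suc m * x) = \<Phi> (k * (k^m*x))" by (simp add: mult.assoc)
  also have "\<dots> = 2 * \<Phi> (k^m*x)" by (rule scale)
  finally show ?case using Suc by simp
qed simp

lemma qsub: "\<Phi> (a+b) \<le> 2*\<Phi> a + 2*\<Phi> b"
proof -
  define m where "m = max \<bar>a\<bar> \<bar>b\<bar>"
  have m0: "m \<ge> 0" unfolding m_def by simp
  have "\<bar>a+b\<bar> \<le> 2*m" unfolding m_def by (simp add: max_def, smt (verit))
  also have "2*m \<le> k*m" using k2 m0 by (simp add: mult_right_mono)
  also have "k*m = \<bar>k*m\<bar>" using k2 m0 by simp
  finally have "\<bar>a+b\<bar> \<le> \<bar>k*m\<bar>" .
  then have "\<Phi> (a+b) \<le> \<Phi> (k*m)" by (rule mono)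
  also have "\<dots> = 2 * \<Phi> m" by (rule scale)
  also have "\<Phi> m \<le> \<Phi> a + \<Phi> b"
  proof (cases "\<bar>a\<bar> \<le> \<bar>b\<bar>")
    case True
    then have "m = \<bar>b\<bar>" unfolding m_def by simp
    then show ?thesis using ev[of b] nn[of a] by simp
  next
    case False
    then have "m = \<bar>a\<bar>" unfolding m_def by simp
    then show ?thesis using ev[of a] nn[of b] by simp
  qed
  finally show ?thesis by simp
qed

lemma Phi_pos: "x \<noteq> 0 \<Longrightarrow> \<Phi> x > 0"
proof -
  assume "x \<noteq> 0"
  then have "0 < c0 * min \<bar>x\<bar> 1" using cpos by simp
  then show ?thesis using low[of x] by linarith
qed

lemma Phi_small: "\<Phi> x < c0 \<Longrightarrow> \<bar>x\<bar> \<le> \<Phi> x / c0"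
proof -
  assume a: "\<Phi> x < c0"
  have "c0 * min \<bar>x\<bar> 1 < c0" using low[of x] a by linarith
  then have "min \<bar>x\<bar> 1 < 1" using cpos by simp
  then have "c0 * \<bar>x\<bar> \<le> \<Phi> x" using low[of x] by (simp add: min_def split: if_splits)
  then show ?thesis using cpos by (simp add: field_simps)
qed

definition rho :: "('a \<Rightarrow> real) \<Rightarrow> ennreal" where
  "rho g = (\<integral>\<^sup>+ x. ennreal (\<Phi> (g x)) \<partial>M)"

lemma N_def': "orlicz_norm M \<Phi> g = Inf {l. l>0 \<and> rho (\<lambda>x. \<bar>g x\<bar>/l) \<le> 1}"
  by (simp add: orlicz_norm_def rho_def)

lemma rho_abs: "rho (\<lambda>x. \<bar>g x\<bar>) = rho g"
  by (simp add: rho_def ev)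

lemma rho_scale: "g \<in> borel_measurable M \<Longrightarrow> rho (\<lambda>x. k^m * g x) = ennreal (2^m) * rho g"
  unfolding rho_def scale_pow
  by (subst nn_integral_cmult[symmetric]) (auto simp: ennreal_mult nn)

lemma rho_mono: "(\<And>x. x \<in> space M \<Longrightarrow> \<bar>f x\<bar> \<le> \<bar>g x\<bar>) \<Longrightarrow> rho f \<le> rho g"
  unfolding rho_def by (intro nn_integral_mono) (auto intro!: ennreal_leI mono)

lemma rho_add: "f \<in> borel_measurable M \<Longrightarrow> g \<in> borel_measurable M \<Longrightarrow>
   rho (\<lambda>x. f x + g x) \<le> 2 * rho f + 2 * rho g"
proof -
  assume [measurable]: "f \<in> borel_measurable M" "g \<in> borel_measurable M"
  have "rho (\<lambda>x. f x + g x) \<le> (\<integral>\<^sup>+ x. 2 * ennreal (\<Phi> (f x)) + 2 * ennreal (\<Phi> (g x)) \<partial>M)"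
    unfolding rho_def
  proof (intro nn_integral_mono)
    fix x
    have "ennreal (\<Phi> (f x + g x)) \<le> ennreal (2*\<Phi> (f x) + 2*\<Phi> (g x))"
      using qsub by (rule ennreal_leI)
    also have "\<dots> = 2 * ennreal (\<Phi> (f x)) + 2 * ennreal (\<Phi> (g x))"
      using nn by (simp add: ennreal_plus ennreal_mult)
    finally show "ennreal (\<Phi> (f x + g x)) \<le> 2 * ennreal (\<Phi> (f x)) + 2 * ennreal (\<Phi> (g x))" .
  qed
  also have "\<dots> = 2 * rho f + 2 * rho g"
    unfolding rho_def by (simp add: nn_integral_add nn_integral_cmult)
  finally show ?thesis .
qed


lemma pow_lemma: "ennreal (2^m) * X \<le> 1 \<longleftrightarrow> X \<le> ennreal ((1/2)^m)"
proof -
  have "ennreal (2^m) * ennreal ((1/2)^m) = 1"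
    by (simp add: ennreal_mult[symmetric] power_mult_distrib[symmetric])
  moreover have "ennreal (2^m) * X \<le> ennreal (2^m) * ennreal ((1/2)^m) \<longleftrightarrow> X \<le> ennreal ((1/2)^m)"
    by (rule ennreal_mult_le_mult_iff) auto
  ultimately show ?thesis by simp
qed

lemma V_iff: "g \<in> L_Phi M \<Phi> \<longleftrightarrow> g \<in> borel_measurable M \<and> rho g < \<infinity>"
  by (simp add: L_Phi_def rho_def)

lemma kpos: "k > 0" using k2 by simp

lemma S_up: "rho (\<lambda>x. \<bar>g x\<bar>/l) \<le> 1 \<Longrightarrow> 0 < l \<Longrightarrow> l \<le> l' \<Longrightarrow> rho (\<lambda>x. \<bar>g x\<bar>/l') \<le> 1"
proof -
  assume a: "rho (\<lambda>x. \<bar>g x\<bar>/l) \<le> 1" "0 < l" "l \<le> l'"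
  have "rho (\<lambda>x. \<bar>g x\<bar>/l') \<le> rho (\<lambda>x. \<bar>g x\<bar>/l)"
    using a by (intro rho_mono) (auto intro!: divide_left_mono)
  then show ?thesis using a by simp
qed

lemma rho_div_pow: "g \<in> borel_measurable M \<Longrightarrow> rho g = ennreal (2^m) * rho (\<lambda>x. \<bar>g x\<bar> / k^m)"
proof -
  assume [measurable]: "g \<in> borel_measurable M"
  have "rho (\<lambda>x. k^m * (\<bar>g x\<bar> / k^m)) = ennreal (2^m) * rho (\<lambda>x. \<bar>g x\<bar> / k^m)"
    by (rule rho_scale) measurable
  moreover have "(\<lambda>x. k^m * (\<bar>g x\<bar> / k^m)) = (\<lambda>x. \<bar>g x\<bar>)" using kpos by auto
  ultimately show ?thesis using rho_abs by simp
qed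

lemma rho_mul_pow: "g \<in> borel_measurable M \<Longrightarrow> rho (\<lambda>x. \<bar>g x\<bar> / (1/k)^m) = ennreal (2^m) * rho g"
proof -
  assume [measurable]: "g \<in> borel_measurable M"
  have "(\<lambda>x. \<bar>g x\<bar> / (1/k)^m) = (\<lambda>x. k^m * \<bar>g x\<bar>)" using kpos by (auto simp: power_one_over)
  then show ?thesis using rho_scale[of "\<lambda>x. \<bar>g x\<bar>" m] rho_abs by simp
qed

abbreviation "N \<equiv> orlicz_norm M \<Phi>"
abbreviation "V \<equiv> L_Phi M \<Phi>"

lemma S_ne: "g \<in> V \<Longrightarrow> \<exists>l>0. rho (\<lambda>x. \<bar>g x\<bar>/l) \<le> 1"
proof -
  assume "g \<in> V"
  then have gm[measurable]: "g \<in> borel_measurable M" and fin: "rho g < \<infinity>" by (auto simp: V_iff)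
  obtain r where r: "rho g = ennreal r" "r \<ge> 0" using fin by (cases "rho g") auto
  obtain m where m: "r < 2^m" using real_arch_pow[of 2 r] by auto
  have "ennreal (2^m) * rho (\<lambda>x. \<bar>g x\<bar> / k^m) \<le> ennreal (2^m) * 1"
  proof -
    have le: "ennreal r \<le> ennreal (2^m)" using m by (intro ennreal_leI) simp
    show ?thesis using rho_div_pow[OF gm, of m] r(1) le by (metis mult.right_neutral)
  qed
  then have "rho (\<lambda>x. \<bar>g x\<bar> / k^m) \<le> 1"
    by (subst (asm) ennreal_mult_le_mult_iff) auto
  then show ?thesis using kpos by (intro exI[of _ "k^m"]) auto
qed

lemma N_lower: "0 < l \<Longrightarrow> rho (\<lambda>x. \<bar>g x\<bar>/l) \<le> 1 \<Longrightarrow> N g \<le> l"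
  unfolding N_def' by (rule cInf_lower) (auto intro!: bdd_belowI[of _ 0])

lemma N_nonneg: "g \<in> V \<Longrightarrow> 0 \<le> N g"
  unfolding N_def' using S_ne by (intro cInf_greatest) auto

lemma N_less: "g \<in> V \<Longrightarrow> N g < l \<Longrightarrow> rho (\<lambda>x. \<bar>g x\<bar>/l) \<le> 1"
proof -
  assume a: "g \<in> V" "N g < l"
  have ne: "{l. l>0 \<and> rho (\<lambda>x. \<bar>g x\<bar>/l) \<le> 1} \<noteq> {}" using S_ne[OF a(1)] by auto
  obtain l' where "l' \<in> {l. l>0 \<and> rho (\<lambda>x. \<bar>g x\<bar>/l) \<le> 1}" "l' < l"
    using a(2) unfolding N_def' using cInf_lessD[OF ne] by blast
  then show ?thesis using S_up[of g l' l] by auto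
qed

lemma C1: "g \<in> V \<Longrightarrow> N g < (1/k)^m \<Longrightarrow> rho g \<le> ennreal ((1/2)^m)"
proof -
  assume a: "g \<in> V" "N g < (1/k)^m"
  then have "rho (\<lambda>x. \<bar>g x\<bar> / (1/k)^m) \<le> 1" by (rule N_less)
  then show ?thesis using rho_mul_pow[of g m] a(1) pow_lemma by (simp add: V_iff)
qed

lemma C2: "g \<in> borel_measurable M \<Longrightarrow> rho g \<le> ennreal ((1/2)^m) \<Longrightarrow> N g \<le> (1/k)^m"
proof -
  assume a: "g \<in> borel_measurable M" "rho g \<le> ennreal ((1/2)^m)"
  then have "rho (\<lambda>x. \<bar>g x\<bar> / (1/k)^m) \<le> 1" using rho_mul_pow[OF a(1)] pow_lemma by simp
  then show ?thesis using kpos by (intro N_lower) auto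
qed


lemma rho_zero: "rho (\<lambda>x. 0) = 0" by (simp add: rho_def z)

lemma Q1: "(\<lambda>x. 0) \<in> V" by (simp add: V_iff rho_zero)

lemma Q2: "f \<in> V \<Longrightarrow> g \<in> V \<Longrightarrow> (\<lambda>x. f x + g x) \<in> V"
proof -
  assume a: "f \<in> V" "g \<in> V"
  then have [measurable]: "f \<in> borel_measurable M" "g \<in> borel_measurable M"
    and fin: "rho f < \<infinity>" "rho g < \<infinity>" by (auto simp: V_iff)
  have "2 * rho f + 2 * rho g < \<infinity>" using fin by (simp add: ennreal_mult_less_top)
  then have "rho (\<lambda>x. f x + g x) < \<infinity>" using rho_add[of f g] by (simp add: order.strict_trans1)
  then show ?thesis by (simp add: V_iff)
qed

lemma Q3: "f \<in> V \<Longrightarrow> (\<lambda>x. c * f x) \<in> V"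
proof -
  assume a: "f \<in> V"
  then have [measurable]: "f \<in> borel_measurable M" and fin: "rho f < \<infinity>" by (auto simp: V_iff)
  obtain m where m: "\<bar>c\<bar> < k^m" using real_arch_pow[of k "\<bar>c\<bar>"] k2 by auto
  have "rho (\<lambda>x. c * f x) \<le> rho (\<lambda>x. k^m * f x)"
    using m kpos by (intro rho_mono) (auto simp: abs_mult intro!: mult_right_mono)
  also have "\<dots> = ennreal (2^m) * rho f" by (rule rho_scale) measurable
  also have "\<dots> < \<infinity>" using fin by (simp add: ennreal_mult_less_top)
  finally show ?thesis by (simp add: V_iff)
qed

lemma N_AE_zero: "AE x in M. g x = 0 \<Longrightarrow> N g = 0"
proof -
  assume a: "AE x in M. g x = 0"
  have "rho (\<lambda>x. \<bar>g x\<bar>/l) = 0" for l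
    unfolding rho_def using a by (subst nn_integral_cong_AE[where v="\<lambda>x. 0"]) (auto simp: z)
  then have "{l. l>0 \<and> rho (\<lambda>x. \<bar>g x\<bar>/l) \<le> 1} = {0<..}" by auto
  then show ?thesis unfolding N_def' by simp
qed

lemma N_zero_AE: "g \<in> V \<Longrightarrow> N g = 0 \<Longrightarrow> AE x in M. g x = 0"
proof -
  assume g: "g \<in> V" and N0: "N g = 0"
  then have gm[measurable]: "g \<in> borel_measurable M" by (simp add: V_iff)
  have small: "AE x in M. \<bar>g x\<bar> \<le> e" if e: "e > 0" for e
  proof -
    define A where "A = {x \<in> space M. e < \<bar>g x\<bar>}"
    have A[measurable]: "A \<in> sets M" unfolding A_def by measurable
    have ePos: "\<Phi> 1 > 0" using Phi_pos by simp
    have bound: "ennreal (2^m * \<Phi> 1) * emeasure M A \<le> 1" for m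
    proof -
      have l: "0 < e / k^m" using e kpos by simp
      have "ennreal (2^m * \<Phi> 1) * emeasure M A = (\<integral>\<^sup>+ x. ennreal (2^m * \<Phi> 1) * indicator A x \<partial>M)"
        by (simp add: nn_integral_cmult_indicator)
      also have "\<dots> \<le> rho (\<lambda>x. \<bar>g x\<bar> / (e / k^m))"
        unfolding rho_def
      proof (intro nn_integral_mono)
        fix x assume x: "x \<in> space M"
        show "ennreal (2^m * \<Phi> 1) * indicator A x \<le> ennreal (\<Phi> (\<bar>g x\<bar> / (e / k^m)))"
        proof (cases "x \<in> A")
          case True
          then have "e < \<bar>g x\<bar>" unfolding A_def by simp
          then have "1 \<le> \<bar>g x\<bar> / e" using e by simp
          then have "k^m * 1 \<le> k^m * (\<bar>g x\<bar> / e)" using kpos by (intro mult_left_mono) auto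
          also have "k^m * (\<bar>g x\<bar> / e) = \<bar>g x\<bar> / (e / k^m)" using e kpos by (simp add: field_simps)
          finally have "\<bar>k^m * 1\<bar> \<le> \<bar>\<bar>g x\<bar> / (e / k^m)\<bar>" using kpos e by simp
          then have "\<Phi> (k^m * 1) \<le> \<Phi> (\<bar>g x\<bar> / (e / k^m))" by (rule mono)
          then show ?thesis using True scale_pow[of m 1] by (simp add: ennreal_leI)
        qed simp
      qed
      also have "\<dots> \<le> 1" using N_less[OF g, of "e / k^m"] N0 l by simp
      finally show ?thesis .
    qed
    have "emeasure M A = 0"
    proof (rule ccontr)
      assume ne: "emeasure M A \<noteq> 0"
      have "emeasure M A \<noteq> \<infinity>"
      proof
        assume "emeasure M A = \<infinity>"
        then show False using bound[of 0] ePos by (simp add: ennreal_mult_top top_unique)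
      qed
      then obtain a where a: "emeasure M A = ennreal a" "a \<ge> 0" by (cases "emeasure M A") auto
      with ne have apos: "a > 0" by (cases "a = 0") auto
      obtain m where m: "1 / (\<Phi> 1 * a) < 2^m" using real_arch_pow[of 2 "1 / (\<Phi> 1 * a)"] by auto
      have "ennreal (2^m * \<Phi> 1 * a) \<le> 1" using bound[of m] a ePos by (simp add: ennreal_mult[symmetric])
      then have "2^m * \<Phi> 1 * a \<le> 1" by (simp add: ennreal_le_1)
      moreover have "1 < 2^m * (\<Phi> 1 * a)" using m ePos apos by (simp add: field_simps)
      ultimately show False by (simp add: mult.assoc)
    qed
    then show ?thesis using AE_iff_measurable[OF A, of "\<lambda>x. \<bar>g x\<bar> \<le> e"] unfolding A_def by (simp add: not_le)
  qed
  have "AE x in M. \<forall>i::nat. \<bar>g x\<bar> \<le> 1 / Suc i"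
    using small by (subst AE_all_countable) auto
  then show ?thesis
  proof (eventually_elim)
    fix x assume h: "\<forall>i::nat. \<bar>g x\<bar> \<le> 1 / Suc i"
    show "g x = 0"
    proof (rule ccontr)
      assume "g x \<noteq> 0"
      then obtain i where "1 / Suc i < \<bar>g x\<bar>"
        using reals_Archimedean[of "\<bar>g x\<bar>"] by (auto simp: inverse_eq_divide)
      then show False using h by (metis not_le)
    qed
  qed
qed


lemma Q6a: "f \<in> V \<Longrightarrow> c \<noteq> 0 \<Longrightarrow> N (\<lambda>x. c * f x) \<le> \<bar>c\<bar> * N f"
proof -
  assume f: "f \<in> V" and c: "c \<noteq> 0"
  have "N (\<lambda>x. c * f x) / \<bar>c\<bar> \<le> l" if l: "N f < l" for l
  proof -
    have lpos: "0 < l" using N_nonneg[OF f] l by simp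
    have "rho (\<lambda>x. \<bar>f x\<bar>/l) \<le> 1" using N_less[OF f l] .
    moreover have "(\<lambda>x. \<bar>c * f x\<bar> / (\<bar>c\<bar> * l)) = (\<lambda>x. \<bar>f x\<bar>/l)"
      using c by (auto simp: abs_mult)
    ultimately have "N (\<lambda>x. c * f x) \<le> \<bar>c\<bar> * l"
      using c lpos by (intro N_lower) auto
    then show ?thesis using c by (simp add: field_simps)
  qed
  then have "N (\<lambda>x. c * f x) / \<bar>c\<bar> \<le> N f" by (rule dense_ge)
  then show ?thesis using c by (simp add: field_simps)
qed

lemma Q6: "f \<in> V \<Longrightarrow> N (\<lambda>x. c * f x) = \<bar>c\<bar> * N f"
proof -
  assume f: "f \<in> V"
  show ?thesis
  proof (cases "c = 0")
    case True
    then show ?thesis using N_AE_zero[of "\<lambda>x. c * f x"] by simp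
  next
    case False
    have cf: "(\<lambda>x. c * f x) \<in> V" using Q3[OF f] .
    have "N (\<lambda>x. (1/c) * (c * f x)) \<le> \<bar>1/c\<bar> * N (\<lambda>x. c * f x)"
      using Q6a[OF cf, of "1/c"] False by simp
    moreover have "(\<lambda>x. (1/c) * (c * f x)) = f" using False by auto
    ultimately have "N f \<le> \<bar>1/c\<bar> * N (\<lambda>x. c * f x)" by simp
    then have "\<bar>c\<bar> * N f \<le> N (\<lambda>x. c * f x)" using False by (simp add: field_simps)
    with Q6a[OF f False] show ?thesis by simp
  qed
qed

lemma Q7core:
  assumes f: "f \<in> V" and g: "g \<in> V" and l1: "N f < l1" and l2: "N g < l2"
  shows "N (\<lambda>x. f x + g x) \<le> k^2 * max l1 l2"
proof -
  have l1p: "0 < l1" using N_nonneg[OF f] l1 by simp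
  have l2p: "0 < l2" using N_nonneg[OF g] l2 by simp
  define L where "L = k^2 * max l1 l2"
  have Lp: "0 < L" unfolding L_def using kpos l1p by simp
  have [measurable]: "f \<in> borel_measurable M" "g \<in> borel_measurable M" using f g by (auto simp: V_iff)
  have R1: "rho (\<lambda>x. \<bar>f x\<bar>/l1) \<le> 1" using N_less[OF f l1] .
  have R2: "rho (\<lambda>x. \<bar>g x\<bar>/l2) \<le> 1" using N_less[OF g l2] .
  have one: "2 * \<Phi> (h / L) \<le> (1/2) * \<Phi> (\<bar>h\<bar> / l)" if l: "0 < l" "l \<le> max l1 l2" for h l
  proof -
    have "\<bar>h / L\<bar> \<le> \<bar>\<bar>h\<bar> / (k^2 * l)\<bar>"
      unfolding L_def using l kpos
      by (auto simp: abs_divide intro!: divide_left_mono mult_pos_pos)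
    then have A: "\<Phi> (h / L) \<le> \<Phi> (\<bar>h\<bar> / (k^2 * l))" by (rule mono)
    have "k^2 * (\<bar>h\<bar> / (k^2 * l)) = \<bar>h\<bar> / l" using kpos by simp
    then have B: "\<Phi> (\<bar>h\<bar> / l) = 4 * \<Phi> (\<bar>h\<bar> / (k^2 * l))"
      using scale_pow[of 2 "\<bar>h\<bar> / (k^2 * l)"] by simp
    show ?thesis using A B by linarith
  qed
  have pt: "ennreal (\<Phi> (\<bar>f x + g x\<bar> / L)) \<le>
      ennreal (1/2) * ennreal (\<Phi> (\<bar>f x\<bar>/l1)) + ennreal (1/2) * ennreal (\<Phi> (\<bar>g x\<bar>/l2))" for x
  proof -
    have "\<Phi> (\<bar>f x + g x\<bar> / L) = \<Phi> (f x / L + g x / L)"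
      using ev[of "f x / L + g x / L"] Lp by (simp add: add_divide_distrib[symmetric] abs_divide)
    also have "\<dots> \<le> 2 * \<Phi> (f x / L) + 2 * \<Phi> (g x / L)" by (rule qsub)
    also have "\<dots> \<le> (1/2) * \<Phi> (\<bar>f x\<bar>/l1) + (1/2) * \<Phi> (\<bar>g x\<bar>/l2)"
      using one[of l1 "f x"] one[of l2 "g x"] l1p l2p by simp
    finally have "\<Phi> (\<bar>f x + g x\<bar> / L) \<le> (1/2) * \<Phi> (\<bar>f x\<bar>/l1) + (1/2) * \<Phi> (\<bar>g x\<bar>/l2)" .
    then have "ennreal (\<Phi> (\<bar>f x + g x\<bar> / L)) \<le> ennreal ((1/2) * \<Phi> (\<bar>f x\<bar>/l1) + (1/2) * \<Phi> (\<bar>g x\<bar>/l2))"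
      by (rule ennreal_leI)
    also have "\<dots> = ennreal (1/2) * ennreal (\<Phi> (\<bar>f x\<bar>/l1)) + ennreal (1/2) * ennreal (\<Phi> (\<bar>g x\<bar>/l2))"
    proof -
      have h: "ennreal ((1/2) * \<Phi> y) = ennreal (1/2) * ennreal (\<Phi> y)" for y
        by (rule ennreal_mult) (auto simp: nn)
      have "ennreal ((1/2) * \<Phi> (\<bar>f x\<bar>/l1) + (1/2) * \<Phi> (\<bar>g x\<bar>/l2)) =
        ennreal ((1/2) * \<Phi> (\<bar>f x\<bar>/l1)) + ennreal ((1/2) * \<Phi> (\<bar>g x\<bar>/l2))"
        by (rule ennreal_plus) (auto simp: nn)
      then show ?thesis by (simp only: h)
    qed
    finally show ?thesis .
  qed
  have "rho (\<lambda>x. \<bar>f x + g x\<bar> / L) \<le>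
      (\<integral>\<^sup>+ x. ennreal (1/2) * ennreal (\<Phi> (\<bar>f x\<bar>/l1)) + ennreal (1/2) * ennreal (\<Phi> (\<bar>g x\<bar>/l2)) \<partial>M)"
    unfolding rho_def by (intro nn_integral_mono pt)
  also have "\<dots> = ennreal (1/2) * rho (\<lambda>x. \<bar>f x\<bar>/l1) + ennreal (1/2) * rho (\<lambda>x. \<bar>g x\<bar>/l2)"
    unfolding rho_def by (simp add: nn_integral_add nn_integral_cmult)
  also have "\<dots> \<le> ennreal (1/2) * 1 + ennreal (1/2) * 1"
    using R1 R2 by (intro add_mono mult_left_mono) auto
  also have "\<dots> = 1"
  proof -
    have "ennreal (1/2) + ennreal (1/2) = ennreal (1/2 + 1/2)" by (rule ennreal_plus[symmetric]) auto
    then show ?thesis by simp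
  qed
  finally show ?thesis unfolding L_def using Lp L_def by (intro N_lower) auto
qed

lemma Q7: "f \<in> V \<Longrightarrow> g \<in> V \<Longrightarrow> N (\<lambda>x. f x + g x) \<le> k^2 * (N f + N g)"
proof -
  assume f: "f \<in> V" and g: "g \<in> V"
  have k2p: "k^2 > 0" using kpos by simp
  show ?thesis
  proof (rule field_le_epsilon)
    fix e :: real assume e: "0 < e"
    define d where "d = e / (2 * k^2)"
    have d: "0 < d" unfolding d_def using e k2p by simp
    have "N (\<lambda>x. f x + g x) \<le> k^2 * max (N f + d) (N g + d)"
      using d by (intro Q7core[OF f g]) auto
    also have "\<dots> \<le> k^2 * ((N f + d) + (N g + d))"
      using N_nonneg[OF f] N_nonneg[OF g] d k2p by (intro mult_left_mono) auto
    also have "\<dots> = k^2 * (N f + N g) + e" unfolding d_def using k2p by (simp add: field_simps)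
    finally show "N (\<lambda>x. f x + g x) \<le> k^2 * (N f + N g) + e" .
  qed
qed


lemma Vdiff: "g \<in> V \<Longrightarrow> h \<in> V \<Longrightarrow> (\<lambda>x. g x - h x) \<in> V"
proof -
  assume "g \<in> V" "h \<in> V"
  then have "(\<lambda>x. g x + (-1) * h x) \<in> V" by (intro Q2 Q3)
  then show ?thesis by simp
qed

lemma rho_swap: "rho (\<lambda>x. g x - h x) = rho (\<lambda>x. h x - g x)"
  unfolding rho_def by (metis abs_minus_commute ev)

lemma isCont_Phi: "isCont \<Phi> x"
  using cont continuous_on_eq_continuous_at open_UNIV by blast

lemma complete:
  assumes F: "\<forall>n. F n \<in> V"
    and cau: "\<forall>e>0. \<exists>n0. \<forall>n\<ge>n0. \<forall>m\<ge>n0. N (\<lambda>x. F n x - F m x) < e"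
  shows "\<exists>f\<in>V. (\<lambda>n. N (\<lambda>x. F n x - f x)) \<longlonglongrightarrow> 0"
proof -
  have Fm[measurable]: "F n \<in> borel_measurable M" for n using F by (simp add: V_iff)
  have ex: "\<forall>i. \<exists>n0. \<forall>a\<ge>n0. \<forall>b\<ge>n0. N (\<lambda>x. F a x - F b x) < (1/k)^i"
    using cau kpos by simp
  obtain \<phi> where \<phi>0: "\<forall>i. \<forall>a\<ge>\<phi> i. \<forall>b\<ge>\<phi> i. N (\<lambda>x. F a x - F b x) < (1/k)^i"
    using choice[OF ex] by blast
  have \<phi>: "\<And>i a b. \<phi> i \<le> a \<Longrightarrow> \<phi> i \<le> b \<Longrightarrow> N (\<lambda>x. F a x - F b x) < (1/k)^i"
    using \<phi>0 by blast
  define \<psi> where "\<psi> j = (\<Sum>i\<le>j. \<phi> i) + j" for j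
  have \<psi>ge: "\<phi> i \<le> \<psi> j" if "i \<le> j" for i j
  proof -
    have "\<phi> i \<le> (\<Sum>i\<le>j. \<phi> i)" using that by (intro member_le_sum) auto
    then show ?thesis unfolding \<psi>_def by simp
  qed
  define G where "G j = F (\<psi> j)" for j
  define d where "d j x = G (Suc j) x - G j x" for j x
  have Gm[measurable]: "G j \<in> borel_measurable M" for j unfolding G_def by simp
  have dm[measurable]: "d j \<in> borel_measurable M" for j unfolding d_def[abs_def] by simp
  have rd: "rho (d j) \<le> ennreal ((1/2)^j)" for j
  proof -
    have "N (\<lambda>x. G (Suc j) x - G j x) < (1/k)^j"
      unfolding G_def by (intro \<phi> \<psi>ge) auto
    moreover have "(\<lambda>x. G (Suc j) x - G j x) \<in> V" unfolding G_def using F by (intro Vdiff) auto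
    ultimately show ?thesis using C1 unfolding d_def[abs_def] by blast
  qed
  have "(\<integral>\<^sup>+ x. (\<Sum>j. ennreal (\<Phi> (d j x))) \<partial>M) = (\<Sum>j. rho (d j))"
    unfolding rho_def by (rule nn_integral_suminf) measurable
  also have "\<dots> \<le> (\<Sum>j. ennreal ((1/2)^j))" using rd by (intro suminf_le) auto
  also have "\<dots> = ennreal (\<Sum>j. (1/2)^j)"
    by (rule suminf_ennreal2) (auto intro!: summable_geometric)
  finally have le: "(\<integral>\<^sup>+ x. (\<Sum>j. ennreal (\<Phi> (d j x))) \<partial>M) \<le> ennreal (\<Sum>j. (1/2::real)^j)" .
  have "(\<integral>\<^sup>+ x. (\<Sum>j. ennreal (\<Phi> (d j x))) \<partial>M) \<noteq> \<infinity>"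
  proof
    assume "(\<integral>\<^sup>+ x. (\<Sum>j. ennreal (\<Phi> (d j x))) \<partial>M) = \<infinity>"
    with le show False by (simp add: top_unique)
  qed
  then have "AE x in M. (\<Sum>j. ennreal (\<Phi> (d j x))) \<noteq> \<infinity>"
    by (intro nn_integral_noteq_infinite) measurable
  then have AEconv: "AE x in M. convergent (\<lambda>j. G j x)"
  proof (eventually_elim)
    fix x assume h: "(\<Sum>j. ennreal (\<Phi> (d j x))) \<noteq> \<infinity>"
    then have sP: "summable (\<lambda>j. \<Phi> (d j x))" using nn by (intro summable_suminf_not_top) auto
    then have "(\<lambda>j. \<Phi> (d j x)) \<longlonglongrightarrow> 0" by (rule summable_LIMSEQ_zero)
    then have "eventually (\<lambda>j. \<Phi> (d j x) < c0) sequentially" using cpos by (rule order_tendstoD)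
    then have "eventually (\<lambda>j. norm (d j x) \<le> \<Phi> (d j x) / c0) sequentially"
      by eventually_elim (use Phi_small in auto)
    moreover have "summable (\<lambda>j. \<Phi> (d j x) / c0)" using sP by (rule summable_divide)
    ultimately have sd: "summable (\<lambda>j. d j x)" by (rule summable_comparison_test_ev)
    have Geq: "G j x = G 0 x + (\<Sum>i<j. d i x)" for j
      by (induction j) (auto simp: d_def)
    have "(\<lambda>j. G 0 x + (\<Sum>i<j. d i x)) \<longlonglongrightarrow> G 0 x + (\<Sum>i. d i x)"
      using summable_LIMSEQ[OF sd] by (intro tendsto_add) auto
    moreover have "(\<lambda>j. G j x) = (\<lambda>j. G 0 x + (\<Sum>i<j. d i x))" by (rule ext) (rule Geq)
    ultimately show "convergent (\<lambda>j. G j x)" unfolding convergent_def by metis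
  qed
  define f where "f x = lim (\<lambda>j. G j x)" for x
  have fm[measurable]: "f \<in> borel_measurable M" unfolding f_def[abs_def] by measurable
  have AElim: "AE x in M. (\<lambda>j. G j x) \<longlonglongrightarrow> f x"
    using AEconv by eventually_elim (simp add: f_def convergent_LIMSEQ_iff)
  have key: "rho (\<lambda>x. F n x - f x) \<le> ennreal ((1/2)^m)" if nm: "\<phi> m \<le> n" for n m
  proof -
    have "rho (\<lambda>x. F n x - f x) = (\<integral>\<^sup>+ x. liminf (\<lambda>j. ennreal (\<Phi> (F n x - G j x))) \<partial>M)"
      unfolding rho_def
    proof (intro nn_integral_cong_AE)
      show "AE x in M. ennreal (\<Phi> (F n x - f x)) = liminf (\<lambda>j. ennreal (\<Phi> (F n x - G j x)))"
        using AElim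
      proof eventually_elim
        fix x assume "(\<lambda>j. G j x) \<longlonglongrightarrow> f x"
        then have "(\<lambda>j. F n x - G j x) \<longlonglongrightarrow> F n x - f x" by (intro tendsto_diff) auto
        then have "(\<lambda>j. \<Phi> (F n x - G j x)) \<longlonglongrightarrow> \<Phi> (F n x - f x)"
          by (rule isCont_tendsto_compose[OF isCont_Phi])
        then have "(\<lambda>j. ennreal (\<Phi> (F n x - G j x))) \<longlonglongrightarrow> ennreal (\<Phi> (F n x - f x))"
          by (rule tendsto_ennrealI)
        then show "ennreal (\<Phi> (F n x - f x)) = liminf (\<lambda>j. ennreal (\<Phi> (F n x - G j x)))"
          by (intro lim_imp_Liminf[symmetric]) auto
      qed
    qed
    also have "\<dots> \<le> liminf (\<lambda>j. rho (\<lambda>x. F n x - G j x))"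
      unfolding rho_def by (intro nn_integral_liminf) measurable
    also have "\<dots> \<le> ennreal ((1/2)^m)"
    proof (intro Liminf_le)
      show "\<forall>\<^sub>F j in sequentially. rho (\<lambda>x. F n x - G j x) \<le> ennreal ((1/2)^m)"
        unfolding eventually_sequentially
      proof (intro exI allI impI)
        fix j assume "m \<le> j"
        then have "N (\<lambda>x. F n x - G j x) < (1/k)^m"
          unfolding G_def using nm by (intro \<phi> \<psi>ge) auto
        moreover have "(\<lambda>x. F n x - G j x) \<in> V" unfolding G_def using F by (intro Vdiff) auto
        ultimately show "rho (\<lambda>x. F n x - G j x) \<le> ennreal ((1/2)^m)" using C1 by blast
      qed
    qed simp
    finally show ?thesis .
  qed
  have fV: "f \<in> V"
  proof -
    have k0: "rho (\<lambda>x. F (\<phi> 0) x - f x) \<le> ennreal ((1/2)^0)" by (rule key) simp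
    then have k1: "rho (\<lambda>x. F (\<phi> 0) x - f x) \<le> 1" by simp
    have le1: "rho (\<lambda>x. f x - F (\<phi> 0) x) \<le> 1"
      by (subst rho_swap) (rule k1)
    then have fin1: "rho (\<lambda>x. f x - F (\<phi> 0) x) < \<infinity>"
      by (rule order.strict_trans1) simp
    have fin2: "rho (F (\<phi> 0)) < \<infinity>" using F by (simp add: V_iff)
    have "rho (\<lambda>x. f x) = rho (\<lambda>x. (f x - F (\<phi> 0) x) + F (\<phi> 0) x)" by simp
    also have "\<dots> \<le> 2 * rho (\<lambda>x. f x - F (\<phi> 0) x) + 2 * rho (F (\<phi> 0))"
      by (rule rho_add) measurable
    also have "\<dots> < \<infinity>"
      using fin1 fin2 by (simp add: ennreal_mult_less_top)
    finally show ?thesis by (simp add: V_iff)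
  qed
  have "(\<lambda>n. N (\<lambda>x. F n x - f x)) \<longlonglongrightarrow> 0"
  proof (rule LIMSEQ_I)
    fix r :: real assume r: "0 < r"
    obtain m where m: "(1/k)^m < r" using real_arch_pow_inv[OF r, of "1/k"] k2 by auto
    show "\<exists>no. \<forall>n\<ge>no. norm (N (\<lambda>x. F n x - f x) - 0) < r"
    proof (intro exI allI impI)
      fix n assume "\<phi> m \<le> n"
      then have "N (\<lambda>x. F n x - f x) \<le> (1/k)^m" by (intro C2 key) measurable
      moreover have "0 \<le> N (\<lambda>x. F n x - f x)" using F fV by (intro N_nonneg Vdiff) auto
      ultimately show "norm (N (\<lambda>x. F n x - f x) - 0) < r" using m by simp
    qed
  qed
  then show ?thesis using fV by blast
qed

end

theorem mainTheorem14:
  fixes M :: "'a measure" and \<Phi> :: "real \<Rightarrow> real" and k :: real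
  assumes "Nstar_function \<Phi>"
    and "k \<ge> 2"
    and "\<forall>x>0. \<Phi> (k * x) = 2 * \<Phi> x"
  shows "quasi_banach (L_Phi M \<Phi>) (orlicz_norm M \<Phi>) (\<lambda>f. AE x in M. f x = 0)"
proof -
  obtain c where c: "c > 0" "\<forall>x. c * min \<bar>x\<bar> 1 \<le> \<Phi> x"
    using Phi_props(6)[OF assms(1)] by blast
  interpret orl M \<Phi> k c
    using Phi_props[OF assms(1)] assms c by unfold_locales auto
  have C: "\<exists>C\<ge>1. \<forall>f\<in>V. \<forall>g\<in>V. N (\<lambda>x. f x + g x) \<le> C * (N f + N g)"
  proof (intro exI[of _ "k^2"] conjI ballI)
    show "1 \<le> k^2" using k2 by (simp add: one_le_power)
  qed (rule Q7)
  have Z: "\<forall>f\<in>V. N f = 0 \<longleftrightarrow> (AE x in M. f x = 0)"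
    using N_zero_AE N_AE_zero by blast
  have QN: "quasi_normed V N (\<lambda>f. AE x in M. f x = 0)"
    unfolding quasi_normed_def
  proof (intro conjI)
    show "(\<lambda>x. 0) \<in> V" by (rule Q1)
    show "\<forall>f\<in>V. \<forall>g\<in>V. (\<lambda>x. f x + g x) \<in> V" using Q2 by blast
    show "\<forall>c. \<forall>f\<in>V. (\<lambda>x. c * f x) \<in> V" using Q3 by blast
    show "\<forall>f\<in>V. 0 \<le> N f" using N_nonneg by blast
    show "\<forall>c. \<forall>f\<in>V. N (\<lambda>x. c * f x) = \<bar>c\<bar> * N f" using Q6 by blast
  qed (rule Z, rule C)
  show ?thesis
    unfolding quasi_banach_def
  proof (intro conjI allI impI)
    show "quasi_normed V N (\<lambda>f. AE x in M. f x = 0)" by (rule QN)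
    fix F :: "nat \<Rightarrow> 'a \<Rightarrow> real"
    assume h: "(\<forall>n. F n \<in> V) \<and> (\<forall>e>0. \<exists>n0. \<forall>n\<ge>n0. \<forall>m\<ge>n0. N (\<lambda>x. F n x - F m x) < e)"
    show "\<exists>f\<in>V. (\<lambda>n. N (\<lambda>x. F n x - f x)) \<longlonglongrightarrow> 0"
      using h by (intro complete) auto
  qed
qed

end
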